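(* Let $(a_n)_{n\ge1}$ be a bounded relative convex real sequence, and suppose there exists $(t_n)_{n\ge1}\in T_a$ with $\liminf_{n\to\infty}\Delta t_n>0$. Then $$n\,\frac{\Delta a_n}{\Delta t_n}\to0\quad (n\to\infty),$$ and the series $\sum_{n\ge1} n\,\Delta\!\left(\frac{\Delta a_n}{\Delta t_n}\right)$ converges.
   Context: For a real sequence $(x_i)$, $\Delta x_i=x_{i+1}-x_i$ (applied also to the sequence $x_n=\Delta a_n/\Delta t_n$). "Increasing" means strictly increasing. For a real sequence $a=(a_i)_{i\ge1}$, $T_a$ denotes the set of increasing real sequences $(t_i)_{i\ge1}$ such that $(\Delta a_i/\Delta t_i)_{i\ge1}$ is non-decreasing; $a$ is relative convex if $T_a\neq\emptyset$. *)

theory Defs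
  imports "HOL-Analysis.Analysis" "HOL-Library.Liminf_Limsup"
begin

text \<open>Sequences are indexed from 1; values at index 0 are irrelevant.\<close>

definition fdiff :: "(nat \<Rightarrow> real) \<Rightarrow> nat \<Rightarrow> real" ("\<Delta>") where
  "\<Delta> x i = x (Suc i) - x i"

definition dquot :: "(nat \<Rightarrow> real) \<Rightarrow> (nat \<Rightarrow> real) \<Rightarrow> nat \<Rightarrow> real" where
  "dquot a t n = \<Delta> a n / \<Delta> t n"

definition T_set :: "(nat \<Rightarrow> real) \<Rightarrow> (nat \<Rightarrow> real) set" where
  "T_set a = {t. (\<forall>i\<ge>1. t i < t (Suc i)) \<and> (\<forall>i\<ge>1. dquot a t i \<le> dquot a t (Suc i))}"

definition relative_convex :: "(nat \<Rightarrow> real) \<Rightarrow> bool" where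
  "relative_convex a \<longleftrightarrow> T_set a \<noteq> {}"

end

theory Submission
  imports Defs
begin

theorem proposition3p5:
  fixes a t :: "nat \<Rightarrow> real"
  assumes "bounded (a ` {1..})"
    and "relative_convex a"
    and "t \<in> T_set a"
    and "liminf (\<lambda>n. ereal (\<Delta> t n)) > 0"
  shows "(\<lambda>n. real n * dquot a t n) \<longlonglongrightarrow> 0 \<and>
         summable (\<lambda>n. real (Suc n) * \<Delta> (dquot a t) (Suc n))"
proof -
  define x where "x = dquot a t"
  have tinc: "\<And>i. i \<ge> 1 \<Longrightarrow> 0 < \<Delta> t i"
    using assms(3) unfolding T_set_def fdiff_def by auto
  have xmono: "\<And>i. i \<ge> 1 \<Longrightarrow> x i \<le> x (Suc i)"
    using assms(3) unfolding T_set_def x_def by auto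
  have xmono2: "x i \<le> x j" if "1 \<le> i" "i \<le> j" for i j
    using that(2,1)
  proof (induction j rule: dec_induct)
    case base then show ?case by simp
  next
    case (step n) then show ?case using xmono[of n] by simp
  qed
  obtain B where B: "\<And>n. n \<ge> 1 \<Longrightarrow> \<bar>a n\<bar> \<le> B"
    using assms(1) unfolding bounded_iff by auto
  obtain c :: real where c: "0 < c" "ereal c < liminf (\<lambda>n. ereal (\<Delta> t n))"
  proof (cases "liminf (\<lambda>n. ereal (\<Delta> t n))")
    case (real r) then show ?thesis using that[of "r/2"] assms(4) by auto
  next
    case PInf then show ?thesis using that[of 1] by auto
  next
    case MInf then show ?thesis using assms(4) by auto
  qed
  from less_LiminfD[OF c(2)] obtain N0 where N0: "\<And>n. n \<ge> N0 \<Longrightarrow> c < \<Delta> t n"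
    unfolding eventually_sequentially by auto
  define M0 where "M0 = max 1 N0"
  define d where "d = min c (Min (\<Delta> t ` {1..M0}))"
  have dpos: "0 < d"
    unfolding d_def using c(1) tinc by (auto simp: M0_def)
  have dle: "d \<le> \<Delta> t k" if "k \<ge> 1" for k
  proof (cases "k \<ge> N0")
    case True then show ?thesis using N0[of k] unfolding d_def by auto
  next
    case False
    then have "k \<in> {1..M0}" using that by (auto simp: M0_def)
    then have "Min (\<Delta> t ` {1..M0}) \<le> \<Delta> t k" by auto
    then show ?thesis unfolding d_def by auto
  qed
  have da: "a (Suc k) - a k = x k * \<Delta> t k" if "k \<ge> 1" for k
    using tinc[OF that] unfolding x_def dquot_def fdiff_def by auto
  have xnp: "x k \<le> 0" if "k \<ge> 1" for k
  proof (rule ccontr)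
    assume "\<not> x k \<le> 0"
    then have xk: "x k > 0" by simp
    have grow: "a (k + j) \<ge> a k + real j * (x k * d)" for j
    proof (induction j)
      case 0 then show ?case by simp
    next
      case (Suc j)
      have "x k \<le> x (k + j)" using xmono2[of k "k+j"] that by simp
      moreover have "d \<le> \<Delta> t (k + j)" using dle that by simp
      ultimately have "x k * d \<le> x (k+j) * \<Delta> t (k + j)"
        using xk dpos by (intro mult_mono) auto
      moreover have "a (Suc (k + j)) - a (k + j) = x (k+j) * \<Delta> t (k + j)"
        using da that by simp
      ultimately show ?case using Suc by (simp add: algebra_simps)
    qed
    obtain j where j: "2 * B < real j * (x k * d)"
      using reals_Archimedean3[of "x k * d"] xk dpos by auto
    have "a (k + j) \<ge> a k + real j * (x k * d)" by (rule grow)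
    moreover have "\<bar>a (k + j)\<bar> \<le> B" "\<bar>a k\<bar> \<le> B" using B that by auto
    ultimately show False using j by linarith
  qed
  have amono: "a (Suc k) \<le> a k" if "k \<ge> 1" for k
    using da[OF that] mult_nonpos_nonneg[OF xnp[OF that] less_imp_le[OF tinc[OF that]]] by linarith
  have key: "real (n - m) * d * (- x n) \<le> a m - a n" if "1 \<le> m" "m \<le> n" for m n
    using that(2)
  proof (induction n rule: dec_induct)
    case base then show ?case by simp
  next
    case (step n)
    have n1: "n \<ge> 1" using step that by simp
    have x1: "- x (Suc n) \<le> - x n" using xmono[OF n1] by simp
    have x2: "0 \<le> - x (Suc n)" using xnp[of "Suc n"] by simp
    have "real (n - m) * d * (- x (Suc n)) \<le> real (n - m) * d * (- x n)"
      using x1 dpos by (intro mult_left_mono) auto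
    moreover have "d * (- x (Suc n)) \<le> \<Delta> t n * (- x n)"
      using dle[OF n1] x1 x2 dpos by (intro mult_mono) auto
    moreover have "real (Suc n - m) = real (n - m) + 1" using step by simp
    moreover have "a (Suc n) - a n = x n * \<Delta> t n" using da[OF n1] .
    ultimately show ?case using step.IH by (simp add: algebra_simps)
  qed
  define b where "b n = a (Suc n)" for n
  have "convergent b"
  proof (rule Bseq_monoseq_convergent)
    show "Bseq b" by (rule BseqI'[of _ B]) (auto simp: b_def intro: B)
    show "monoseq b" unfolding monoseq_def
    proof (intro disjI2 allI impI)
      fix m n :: nat assume "m \<le> n"
      then show "b n \<le> b m"
      proof (induction n rule: dec_induct)
        case base then show ?case by simp
      next
        case (step n) then show ?case using amono[of "Suc n"] by (simp add: b_def)
      qed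
    qed
  qed
  then have cb: "Cauchy b" by (rule convergent_Cauchy)
  have lim: "(\<lambda>n. real n * x n) \<longlonglongrightarrow> 0"
  proof (rule LIMSEQ_I)
    fix r :: real assume r: "0 < r"
    obtain M where M: "\<And>m n. m \<ge> M \<Longrightarrow> n \<ge> M \<Longrightarrow> norm (b m - b n) < r * d / 2"
      using CauchyD[OF cb, of "r * d / 2"] r dpos by auto
    show "\<exists>no. \<forall>n\<ge>no. norm (real n * x n - 0) < r"
    proof (intro exI allI impI)
      fix n assume n: "2 * Suc M \<le> n"
      have k: "real (n - Suc M) * d * (- x n) \<le> a (Suc M) - a n"
        using key[of "Suc M" n] n by simp
      have "a (Suc M) - a n = b M - b (n - 1)" unfolding b_def using n
        by (simp add: Suc_diff_1)
      also have "\<dots> < r * d / 2"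
      proof -
        have "norm (b M - b (n - 1)) < r * d / 2" using M[of M "n - 1"] n by auto
        moreover have "b M - b (n - 1) \<le> norm (b M - b (n - 1))" by simp
        ultimately show ?thesis by linarith
      qed
      finally have lt: "real (n - Suc M) * d * (- x n) < r * d / 2" using k by linarith
      have xn: "0 \<le> - x n" using xnp[of n] n by simp
      have nn0: "n \<le> 2 * (n - Suc M)" using n by arith
      have nn: "real n \<le> 2 * real (n - Suc M)"
        using nn0 by (metis of_nat_le_iff of_nat_mult of_nat_numeral)
      have "real n * (- x n) \<le> 2 * real (n - Suc M) * (- x n)"
        using nn xn by (intro mult_right_mono) auto
      then have "d * (real n * (- x n)) \<le> 2 * (real (n - Suc M) * d * (- x n))"
        using dpos by (simp add: algebra_simps)
      also have "\<dots> < r * d" using lt by simp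
      finally have "d * (real n * (- x n)) < d * r" by (simp add: algebra_simps)
      then have "real n * (- x n) < r" using dpos by (metis mult_less_cancel_left_pos)
      moreover have "norm (real n * x n - 0) = real n * (- x n)"
        using xn by (simp add: abs_mult)
      ultimately show "norm (real n * x n - 0) < r" by simp
    qed
  qed
  define f where "f n = real (Suc n) * \<Delta> x (Suc n)" for n
  have fnn: "0 \<le> f n" for n
    using xmono[of "Suc n"] unfolding f_def fdiff_def by simp
  have ident: "sum f {..<N} = real N * x (Suc N) - (\<Sum>n<N. x (Suc n))" for N
    by (induction N) (auto simp: f_def fdiff_def algebra_simps)
  have sb: "d * (- (\<Sum>n<N. x (Suc n))) \<le> a 1 - a (Suc N)" for N
  proof (induction N)
    case 0 then show ?case by simp
  next
    case (Suc N)
    have "d * (- x (Suc N)) \<le> \<Delta> t (Suc N) * (- x (Suc N))"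
      using dle[of "Suc N"] xnp[of "Suc N"] by (intro mult_right_mono) auto
    moreover have "a (Suc (Suc N)) - a (Suc N) = x (Suc N) * \<Delta> t (Suc N)"
      using da[of "Suc N"] by simp
    ultimately show ?case using Suc by (simp add: algebra_simps)
  qed
  have "summable f"
  proof (rule summableI_nonneg_bounded[OF fnn])
    fix N
    have "sum f {..<N} \<le> - (\<Sum>n<N. x (Suc n))"
      using ident[of N] xnp[of "Suc N"] by (simp add: mult_nonneg_nonpos)
    also have "\<dots> \<le> 2 * B / d"
    proof -
      have "d * (- (\<Sum>n<N. x (Suc n))) \<le> 2 * B"
        using sb[of N] B[of 1] B[of "Suc N"] by auto
      then show ?thesis using dpos by (simp add: field_simps)
    qed
    finally show "sum f {..<N} \<le> 2 * B / d" .
  qed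
  then show ?thesis using lim unfolding f_def x_def by simp
qed

end
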